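(* If for some $1\leq n<\omega$ the property $\mathrm{Gal}(\mathrm{Cub}_{\aleph_m},\aleph_m,2^{\aleph_m})$ fails for all $m\in[n,\omega)$, then $2^{\aleph_n}>\aleph_\omega$. In particular, $\aleph_\omega$ is not a strong limit cardinal.
   Context: $\mathrm{Cub}_\mu$ is the club filter on $\mu$. For a regular uncountable cardinal $\mu$, a cardinal $\lambda$ and a filter $\mathscr{F}$ over $\mu$, $\mathrm{Gal}(\mathscr{F},\mu,\lambda)$ means: every sequence $\langle A_\alpha\mid \alpha<\lambda\rangle$ of members of $\mathscr{F}$ has a set of indices $I\subseteq\lambda$ with $|I|=\mu$ and $\bigcap_{\alpha\in I}A_\alpha\in\mathscr{F}$. *)

theory Defs
  imports Main
begin

text \<open>Cardinals are represented, as in the HOL cardinal library, by cardinal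
  well-orders (Card_order r) on a carrier Field r inside some type.\<close>

fun is_aleph :: "nat \<Rightarrow> 'a rel \<Rightarrow> bool" where
  "is_aleph 0 r = (Card_order r \<and> ordIso2 r natLeq)"
| "is_aleph (Suc m) r = (Card_order r \<and> (\<exists>s::'a rel. is_aleph m s \<and> ordIso2 r (cardSuc s)))"

definition is_aleph_omega :: "'a rel \<Rightarrow> bool" where
  "is_aleph_omega w \<longleftrightarrow> Card_order w
     \<and> (\<forall>m (s::'a rel). is_aleph m s \<longrightarrow> ordLess2 s w)
     \<and> (\<forall>t::'a rel. Card_order t \<and> (\<forall>m (s::'a rel). is_aleph m s \<longrightarrow> ordLess2 s t)
            \<longrightarrow> ordLeq3 w t)"

definition strong_limit :: "'a rel \<Rightarrow> bool" where
  "strong_limit w \<longleftrightarrow> (\<forall>s::'a rel. Card_order s \<and> ordLess2 s w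
      \<longrightarrow> ordLess2 (card_of (Pow (Field s))) w)"

definition is_lub :: "'a rel \<Rightarrow> 'a set \<Rightarrow> 'a \<Rightarrow> bool" where
  "is_lub mu B d \<longleftrightarrow> d \<in> Field mu \<and> (\<forall>b\<in>B. (b, d) \<in> mu)
     \<and> (\<forall>d'\<in>Field mu. (\<forall>b\<in>B. (b, d') \<in> mu) \<longrightarrow> (d, d') \<in> mu)"

definition unbounded :: "'a rel \<Rightarrow> 'a set \<Rightarrow> bool" where
  "unbounded mu C \<longleftrightarrow> (\<forall>a\<in>Field mu. \<exists>b\<in>C. (a, b) \<in> mu \<and> a \<noteq> b)"

definition closed :: "'a rel \<Rightarrow> 'a set \<Rightarrow> bool" where
  "closed mu C \<longleftrightarrow> (\<forall>B d. B \<subseteq> C \<and> B \<noteq> {} \<and> is_lub mu B d \<longrightarrow> d \<in> C)"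

definition club :: "'a rel \<Rightarrow> 'a set \<Rightarrow> bool" where
  "club mu C \<longleftrightarrow> C \<subseteq> Field mu \<and> unbounded mu C \<and> closed mu C"

definition Cub :: "'a rel \<Rightarrow> 'a set set" where
  "Cub mu = {A. A \<subseteq> Field mu \<and> (\<exists>C. club mu C \<and> C \<subseteq> A)}"

text \<open>Gal(F, mu, lambda), where lambda is given as an index set L with |L| = lambda.\<close>
definition Gal :: "'a set set \<Rightarrow> 'a rel \<Rightarrow> 'i set \<Rightarrow> bool" where
  "Gal F mu L \<longleftrightarrow> (\<forall>A :: 'i \<Rightarrow> 'a set. (\<forall>i\<in>L. A i \<in> F) \<longrightarrow>
      (\<exists>I\<subseteq>L. ordIso2 (card_of I) mu \<and> \<Inter>(A ` I) \<in> F))"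

end

theory Submission
  imports Defs
begin

unbundle cardinal_syntax

lemma co_wo: "Card_order s \<Longrightarrow> Well_order s"
  by (simp add: card_order_on_well_order_on)

lemma co_refl: "Card_order s \<Longrightarrow> x \<in> Field s \<Longrightarrow> (x,x) \<in> s"
  by (meson co_wo order_on_defs refl_onD)

lemma co_trans: "Card_order s \<Longrightarrow> (x,y) \<in> s \<Longrightarrow> (y,z) \<in> s \<Longrightarrow> (x,z) \<in> s"
  by (meson co_wo order_on_defs transD)

lemma co_antisym: "Card_order s \<Longrightarrow> (x,y) \<in> s \<Longrightarrow> (y,x) \<in> s \<Longrightarrow> x = y"
  by (meson co_wo order_on_defs antisymD)

lemma co_total: "Card_order s \<Longrightarrow> x \<in> Field s \<Longrightarrow> y \<in> Field s \<Longrightarrow> (x,y) \<in> s \<or> (y,x) \<in> s"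
  using co_wo[of s] unfolding order_on_defs total_on_def by (metis co_refl)

lemma co_field: "(x,y) \<in> s \<Longrightarrow> x \<in> Field s \<and> y \<in> Field s"
  by (simp add: FieldI1 FieldI2)

lemma co_wf: "Card_order s \<Longrightarrow> wf (s - Id)"
  using co_wo[of s] unfolding order_on_defs by blast

lemma BND:
  assumes s: "Card_order s" and reg: "regularCard s" and inf: "\<not> finite (Field s)"
    and K: "K \<subseteq> Field s" and Ks: "|K| <o s"
  shows "\<exists>g\<in>Field s. \<forall>b\<in>K. (b,g) \<in> s \<and> b \<noteq> g"
proof -
  have "\<not> cofinal K s"
    using reg K Ks unfolding regularCard_def using not_ordLess_ordIso by blast
  then obtain a where a: "a \<in> Field s" and ha: "\<forall>b\<in>K. \<not> (a \<noteq> b \<and> (a,b) \<in> s)"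
    unfolding cofinal_def by blast
  obtain g where g: "g \<in> Field s" "a \<noteq> g" "(a,g) \<in> s"
    using infinite_Card_order_limit[OF s inf a] by blast
  have "(b,g) \<in> s \<and> b \<noteq> g" if b: "b \<in> K" for b
  proof -
    have bF: "b \<in> Field s" using b K by blast
    have "(b,a) \<in> s"
    proof (cases "a = b")
      case True then show ?thesis using co_refl[OF s bF] by simp
    next
      case False then show ?thesis using ha b co_total[OF s a bF] by blast
    qed
    then have 1: "(b,g) \<in> s" using g(3) co_trans[OF s] by blast
    have "b \<noteq> g"
    proof
      assume "b = g"
      then have "a = g" using co_antisym[OF s g(3)] \<open>(b,a) \<in> s\<close> by simp
      then show False using g(2) by simp
    qed
    then show ?thesis using 1 by simp
  qed
  then show ?thesis using g by blast
qed

lemma under_small: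
  assumes s: "Card_order s" and inf: "\<not> finite (Field s)" and x: "x \<in> Field s"
  shows "|under s x| <o s"
proof -
  obtain y where y: "y \<in> Field s" "x \<noteq> y" "(x,y) \<in> s"
    using infinite_Card_order_limit[OF s inf x] by blast
  have "under s x \<subseteq> underS s y"
  proof
    fix z assume "z \<in> under s x"
    then have z: "(z,x) \<in> s" unfolding under_def by simp
    then have "(z,y) \<in> s" using co_trans[OF s z y(3)] by simp
    moreover have "z \<noteq> y" using co_antisym[OF s y(3)] z y(2) by auto
    ultimately show "z \<in> underS s y" unfolding underS_def by simp
  qed
  then show ?thesis using card_of_underS[OF s y(1)] card_of_mono1 ordLeq_ordLess_trans by blast
qed

lemma LUB:
  assumes s: "Card_order s" and B: "B \<subseteq> Field s" and g: "g \<in> Field s" "\<forall>b\<in>B. (b,g) \<in> s"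
  shows "\<exists>d. is_lub s B d"
proof -
  let ?U = "{d'\<in>Field s. \<forall>b\<in>B. (b,d') \<in> s}"
  have "g \<in> ?U" using g by blast
  then obtain d where d: "d \<in> ?U" and min: "\<And>y. (y,d) \<in> s - Id \<Longrightarrow> y \<notin> ?U"
    using wfE_min[OF co_wf[OF s], of g ?U] by blast
  have "(d,d') \<in> s" if d': "d' \<in> ?U" for d'
  proof (cases "d' = d")
    case True then show ?thesis using co_refl[OF s] d by simp
  next
    case False
    have "(d,d') \<in> s \<or> (d',d) \<in> s" using co_total[OF s] d d' by simp
    then show ?thesis using min[of d'] d' False by blast
  qed
  then show ?thesis unfolding is_lub_def using d by blast
qed

lemma Pow_mono_card: "|A| \<le>o |B| \<Longrightarrow> |Pow A| \<le>o |Pow B|"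
proof -
  assume "|A| \<le>o |B|"
  then obtain f where f: "inj_on f A" "f ` A \<subseteq> B" using card_of_ordLeq by metis
  then have "inj_on (image f) (Pow A)" "image f ` Pow A \<subseteq> Pow B"
    using inj_on_image_Pow image_Pow_mono by blast+
  then show ?thesis using card_of_ordLeq by blast
qed

lemma good_exists:
  fixes s t :: "'a rel" and C :: "'a set \<Rightarrow> 'a set"
  assumes s: "Card_order s" and t: "Card_order t" and tinf: "\<not> finite (Field t)"
    and st: "s =o cardSuc t" and pw: "|Pow (Field t)| <o |Pow (Field s)|"
  shows "\<exists>\<beta>0\<in>Pow (Field s). \<forall>\<delta>\<in>Field s.
            s \<le>o |{\<beta>\<in>Pow (Field s). C \<beta> \<inter> under s \<delta> = C \<beta>0 \<inter> under s \<delta>}|"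
proof (rule ccontr)
  let ?L = "Pow (Field s)"
  let ?T = "\<lambda>\<beta>0 \<delta>. {\<beta>\<in>Pow (Field s). C \<beta> \<inter> under s \<delta> = C \<beta>0 \<inter> under s \<delta>}"
  assume "\<not> ?thesis"
  then have "\<forall>\<beta>\<in>?L. \<exists>\<delta>. \<delta> \<in> Field s \<and> |?T \<beta> \<delta>| <o s"
    by (simp add: not_ordLeq_iff_ordLess[OF card_of_Well_order co_wo[OF s]]) blast
  from bchoice[OF this] obtain dl where dl0: "\<forall>\<beta>\<in>?L. dl \<beta> \<in> Field s \<and> |?T \<beta> (dl \<beta>)| <o s"
    by (elim exE)
  have dl: "dl \<beta> \<in> Field s \<and> |?T \<beta> (dl \<beta>)| <o s" if "\<beta> \<in> ?L" for \<beta>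
    using dl0 that by blast
  define g where "g \<beta> = (dl \<beta>, C \<beta> \<inter> under s (dl \<beta>))" for \<beta>
  have sF: "s =o |Field s|" by (rule ordIso_symmetric[OF card_of_Field_ordIso[OF s]])
  have sinf: "\<not> finite (Field s)"
  proof -
    have "t \<le>o s" by (rule ordLess_imp_ordLeq[OF ordLess_ordIso_trans[OF cardSuc_greater[OF t] ordIso_symmetric[OF st]]])
    then show ?thesis by (rule card_of_ordLeq_infinite[OF card_of_mono2 tinf])
  qed
  let ?G = "g`?L"
  let ?fib = "\<lambda>p. {\<beta>\<in>?L. g \<beta> = p}"
  have "?L \<subseteq> (\<Union>p\<in>?G. ?fib p)" by blast
  then have c1: "|?L| \<le>o |\<Union>p\<in>?G. ?fib p|" by (rule card_of_mono1)
  have c2: "|\<Union>p\<in>?G. ?fib p| \<le>o |SIGMA p:?G. ?fib p|" by (rule card_of_UNION_Sigma)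
  have c3: "|SIGMA p:?G. ?fib p| \<le>o |SIGMA p:?G. Field s|"
  proof (rule card_of_Sigma_mono1, rule ballI)
    fix p assume "p \<in> ?G"
    then obtain \<beta> where b: "\<beta> \<in> ?L" "p = g \<beta>" by blast
    have "?fib p \<subseteq> ?T \<beta> (dl \<beta>)"
    proof
      fix \<beta>' assume "\<beta>' \<in> ?fib p"
      then have "\<beta>' \<in> ?L" "dl \<beta>' = dl \<beta>" "C \<beta>' \<inter> under s (dl \<beta>') = C \<beta> \<inter> under s (dl \<beta>)"
        using b unfolding g_def by auto
      then show "\<beta>' \<in> ?T \<beta> (dl \<beta>)" by simp
    qed
    then have "|?fib p| \<le>o |?T \<beta> (dl \<beta>)|" by (rule card_of_mono1)
    moreover have "|?T \<beta> (dl \<beta>)| \<le>o |Field s|"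
      by (rule ordLess_imp_ordLeq[OF ordLess_ordIso_trans[OF conjunct2[OF dl[OF b(1)]] sF]])
    ultimately show "|?fib p| \<le>o |Field s|" by (rule ordLeq_transitive)
  qed
  have c4: "|SIGMA p:?G. Field s| \<le>o |(SIGMA \<delta>:Field s. Pow (under s \<delta>)) \<times> Field s|"
  proof -
    have "?G \<subseteq> (SIGMA \<delta>:Field s. Pow (under s \<delta>))"
    proof
      fix p assume "p \<in> ?G"
      then obtain \<beta> where b: "\<beta> \<in> ?L" "p = g \<beta>" by blast
      then show "p \<in> (SIGMA \<delta>:Field s. Pow (under s \<delta>))"
        using dl[OF b(1)] unfolding g_def by blast
    qed
    then show ?thesis by (rule card_of_Times_mono1[OF card_of_mono1])
  qed
  have c5: "|(SIGMA \<delta>:Field s. Pow (under s \<delta>)) \<times> Field s| \<le>o |(Field s \<times> Pow (Field t)) \<times> Field s|"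
  proof -
    have "|SIGMA \<delta>:Field s. Pow (under s \<delta>)| \<le>o |SIGMA \<delta>:Field s. Pow (Field t)|"
    proof (rule card_of_Sigma_mono1, rule ballI)
      fix \<delta> assume d: "\<delta> \<in> Field s"
      have "|under s \<delta>| <o cardSuc t"
        by (rule ordLess_ordIso_trans[OF under_small[OF s sinf d] st])
      then have "|under s \<delta>| \<le>o t" by (simp add: cardSuc_ordLeq_ordLess[OF t card_of_Card_order])
      then have "|under s \<delta>| \<le>o |Field t|"
        by (rule ordLeq_ordIso_trans[OF _ ordIso_symmetric[OF card_of_Field_ordIso[OF t]]])
      then show "|Pow (under s \<delta>)| \<le>o |Pow (Field t)|" by (rule Pow_mono_card)
    qed
    then show ?thesis by (rule card_of_Times_mono1)
  qed
  have c6: "|(Field s \<times> Pow (Field t)) \<times> Field s| \<le>o |Pow (Field t)|"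
  proof -
    let ?P = "Pow (Field t)" and ?F = "Field s"
    have Pinf: "\<not> finite ?P" using tinf by simp
    have "t <o |?P|"
      by (rule ordIso_ordLess_trans[OF ordIso_symmetric[OF card_of_Field_ordIso[OF t]] card_of_Pow])
    then have "cardSuc t \<le>o |?P|" by (rule cardSuc_least[OF t card_of_Card_order])
    then have "s \<le>o |?P|" by (rule ordIso_ordLeq_trans[OF st])
    then have FP: "|?F| \<le>o |?P|" by (rule ordIso_ordLeq_trans[OF ordIso_symmetric[OF sF]])
    have PP: "|?P \<times> ?P| \<le>o |?P|" by (rule ordIso_imp_ordLeq[OF card_of_Times_same_infinite[OF Pinf]])
    have "|?F \<times> ?P| \<le>o |?P \<times> ?P|" by (rule card_of_Times_mono1[OF FP])
    then have 1: "|?F \<times> ?P| \<le>o |?P|" using PP by (rule ordLeq_transitive)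
    have 2: "|(?F \<times> ?P) \<times> ?F| \<le>o |?P \<times> ?F|" by (rule card_of_Times_mono1[OF 1])
    have 3: "|?P \<times> ?F| \<le>o |?P \<times> ?P|" by (rule card_of_Times_mono2[OF FP])
    show ?thesis using ordLeq_transitive[OF ordLeq_transitive[OF 2 3] PP] .
  qed
  have "|?L| \<le>o |Pow (Field t)|"
    using ordLeq_transitive[OF c1 ordLeq_transitive[OF c2 ordLeq_transitive[OF c3
          ordLeq_transitive[OF c4 ordLeq_transitive[OF c5 c6]]]]] .
  then show False using not_ordLess_ordLeq[OF pw] by simp
qed

lemma ins_small:
  assumes s: "Card_order s" and sinf: "\<not> finite (Field s)" and X: "|X| <o s"
  shows "|insert a X| <o s"
proof -
  have "|{a}| <o s"
    by (rule finite_ordLess_infinite[OF card_of_Well_order co_wo[OF s]]) (simp_all add: sinf Field_card_of)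
  then have "|{a} \<union> X| <o s" using card_of_Un_ordLess_infinite_Field[OF sinf s] X by blast
  then show ?thesis by simp
qed

lemma tail_lub:
  assumes s: "Card_order s" and lub: "is_lub s (range xs) d"
    and mono: "\<And>i j. i \<le> j \<Longrightarrow> (xs i, xs j) \<in> s"
    and y1: "\<And>n. k \<le> n \<Longrightarrow> (xs n, y n) \<in> s"
    and y2: "\<And>n. k \<le> n \<Longrightarrow> (y n, xs (Suc n)) \<in> s"
  shows "is_lub s (y ` {k..}) d"
  unfolding is_lub_def
proof (intro conjI ballI impI)
  show "d \<in> Field s" using lub unfolding is_lub_def by blast
next
  fix b assume "b \<in> y ` {k..}"
  then obtain n where n: "k \<le> n" "b = y n" by auto
  have "(xs (Suc n), d) \<in> s" using lub unfolding is_lub_def by blast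
  then show "(b, d) \<in> s" using co_trans[OF s y2[OF n(1)]] n(2) by simp
next
  fix d' assume d': "d' \<in> Field s" and ub: "\<forall>b\<in>y ` {k..}. (b, d') \<in> s"
  have "(xs m, d') \<in> s" for m
  proof -
    have 1: "(xs m, xs (m+k)) \<in> s" by (rule mono) simp
    have 2: "(xs (m+k), y (m+k)) \<in> s" by (rule y1) simp
    have 3: "(y (m+k), d') \<in> s" using ub by simp
    show ?thesis using co_trans[OF s co_trans[OF s 1 2] 3] .
  qed
  then show "(d, d') \<in> s" using lub d' unfolding is_lub_def by blast
qed

lemma galvin:
  fixes s t :: "'a rel"
  assumes s: "Card_order s" and t: "Card_order t" and tinf: "\<not> finite (Field t)"
    and st: "s =o cardSuc t" and pw: "|Pow (Field t)| <o |Pow (Field s)|"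
  shows "Gal (Cub s) s (Pow (Field s))"
  unfolding Gal_def
proof (intro allI impI)
  fix A :: "'a set \<Rightarrow> 'a set"
  assume HA: "\<forall>i\<in>Pow (Field s). A i \<in> Cub s"
  let ?L = "Pow (Field s)"
  have "\<forall>i\<in>?L. \<exists>C. club s C \<and> C \<subseteq> A i" using HA unfolding Cub_def by blast
  from bchoice[OF this] obtain C where C0: "\<forall>i\<in>?L. club s (C i) \<and> C i \<subseteq> A i"
    by (elim exE)
  have clC: "club s (C i)" and CA: "C i \<subseteq> A i" if "i \<in> ?L" for i using C0 that by blast+
  have AF: "A i \<subseteq> Field s" if "i \<in> ?L" for i using HA that unfolding Cub_def by blast
  have CF: "C i \<subseteq> Field s" if "i \<in> ?L" for i using clC[OF that] unfolding club_def by blast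
  have sF: "s =o |Field s|" by (rule ordIso_symmetric[OF card_of_Field_ordIso[OF s]])
  have ts: "t <o s" by (rule ordLess_ordIso_trans[OF cardSuc_greater[OF t] ordIso_symmetric[OF st]])
  have sinf: "\<not> finite (Field s)"
    by (rule card_of_ordLeq_infinite[OF card_of_mono2[OF ordLess_imp_ordLeq[OF ts]] tinf])
  have reg: "regularCard s"
  proof -
    have "Cinfinite t" using t tinf by (simp add: cinfinite_def)
    then show ?thesis
      using regularCard_ordIso[OF ordIso_symmetric[OF st] Cinfinite_cardSuc regularCard_cardSuc] by blast
  qed
  have natS: "|UNIV :: nat set| <o s"
  proof -
    have "Cinfinite t" using t tinf by (simp add: cinfinite_def)
    then have "natLeq \<le>o t" by (rule natLeq_ordLeq_cinfinite)
    then have "natLeq <o s" using ts by (rule ordLeq_ordLess_trans)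
    then show ?thesis by (rule ordIso_ordLess_trans[OF card_of_nat])
  qed
  obtain \<beta>0 where b0L: "\<beta>0 \<in> ?L" and b0: "\<And>\<delta>. \<delta> \<in> Field s \<Longrightarrow>
      s \<le>o |{\<beta>\<in>?L. C \<beta> \<inter> under s \<delta> = C \<beta>0 \<inter> under s \<delta>}|"
    using good_exists[OF s t tinf st pw, of C] by blast
  let ?T = "\<lambda>\<delta>. {\<beta>\<in>?L. C \<beta> \<inter> under s \<delta> = C \<beta>0 \<inter> under s \<delta>}"
  define F where "F f \<delta> = (SOME \<beta>. \<beta> \<in> ?T \<delta> \<and> \<beta> \<notin> f ` underS s \<delta>)"
    for f :: "'a \<Rightarrow> 'a set" and \<delta>
  define \<alpha> where "\<alpha> = wfrec (s - Id) F"
  have \<alpha>eq: "\<alpha> \<delta> = (SOME \<beta>. \<beta> \<in> ?T \<delta> \<and> \<beta> \<notin> \<alpha> ` underS s \<delta>)" for \<delta>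
  proof -
    have 1: "\<alpha> \<delta> = F (cut \<alpha> (s - Id) \<delta>) \<delta>" unfolding \<alpha>_def by (rule wfrec[OF co_wf[OF s]])
    have 2: "cut \<alpha> (s - Id) \<delta> ` underS s \<delta> = \<alpha> ` underS s \<delta>"
      by (rule image_cong) (auto simp: underS_def cut_apply)
    show ?thesis using 1 unfolding F_def 2 .
  qed
  have \<alpha>prop: "\<alpha> \<delta> \<in> ?T \<delta> \<and> \<alpha> \<delta> \<notin> \<alpha> ` underS s \<delta>" if d: "\<delta> \<in> Field s" for \<delta>
  proof -
    have ex: "\<exists>\<beta>. \<beta> \<in> ?T \<delta> \<and> \<beta> \<notin> \<alpha> ` underS s \<delta>"
    proof (rule ccontr)
      assume "\<not> ?thesis"
      then have "?T \<delta> \<subseteq> \<alpha> ` underS s \<delta>" by blast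
      then have 1: "|?T \<delta>| \<le>o |\<alpha> ` underS s \<delta>|" by (rule card_of_mono1)
      have 2: "|\<alpha> ` underS s \<delta>| \<le>o |underS s \<delta>|" by (rule card_of_image)
      have "|?T \<delta>| <o s"
        using ordLeq_ordLess_trans[OF ordLeq_transitive[OF 1 2] card_of_underS[OF s d]] .
      then show False using not_ordLess_ordLeq b0[OF d] by blast
    qed
    show ?thesis using someI_ex[OF ex] \<alpha>eq[of \<delta>] by simp
  qed
  have \<alpha>L: "\<alpha> \<delta> \<in> ?L" if "\<delta> \<in> Field s" for \<delta> using \<alpha>prop[OF that] by blast
  have inj: "inj_on \<alpha> (Field s)"
  proof (rule inj_onI, rule ccontr)
    fix x y assume x: "x \<in> Field s" and y: "y \<in> Field s" and e: "\<alpha> x = \<alpha> y" and ne: "x \<noteq> y"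
    have "(x,y) \<in> s \<or> (y,x) \<in> s" using co_total[OF s x y] .
    then show False
    proof
      assume "(x,y) \<in> s"
      then have "x \<in> underS s y" using ne unfolding underS_def by simp
      then show False using \<alpha>prop[OF y] e by auto
    next
      assume "(y,x) \<in> s"
      then have "y \<in> underS s x" using ne unfolding underS_def by simp
      then show False using \<alpha>prop[OF x] e by auto
    qed
  qed
  let ?I = "\<alpha> ` Field s"
  have IL: "?I \<subseteq> ?L" using \<alpha>L by blast
  have Icard: "|?I| =o s"
  proof -
    have "bij_betw \<alpha> (Field s) ?I" using inj by (simp add: bij_betw_def)
    then have FI: "|Field s| =o |?I|" using card_of_ordIso by blast
    show ?thesis using ordIso_transitive[OF ordIso_symmetric[OF FI] card_of_Field_ordIso[OF s]] .
  qed
  define D where "D = {\<gamma> \<in> C \<beta>0. \<forall>\<delta>\<in>underS s \<gamma>. \<gamma> \<in> C (\<alpha> \<delta>)}"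
  have DF: "D \<subseteq> Field s" using CF[OF b0L] unfolding D_def by blast
  have DA: "D \<subseteq> A (\<alpha> \<delta>)" if d: "\<delta> \<in> Field s" for \<delta>
  proof
    fix \<gamma> assume g: "\<gamma> \<in> D"
    then have gC: "\<gamma> \<in> C \<beta>0" and gall: "\<forall>\<delta>\<in>underS s \<gamma>. \<gamma> \<in> C (\<alpha> \<delta>)" unfolding D_def by blast+
    have gF: "\<gamma> \<in> Field s" using g DF by blast
    have "\<gamma> \<in> C (\<alpha> \<delta>)"
    proof (cases "\<delta> \<in> underS s \<gamma>")
      case True then show ?thesis using gall by blast
    next
      case False
      have "(\<gamma>, \<delta>) \<in> s"
      proof (cases "\<gamma> = \<delta>")
        case True then show ?thesis using co_refl[OF s gF] by simp
      next
        case ne: False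
        have "(\<gamma>,\<delta>) \<in> s \<or> (\<delta>,\<gamma>) \<in> s" using co_total[OF s gF d] .
        then show ?thesis using False ne unfolding underS_def by auto
      qed
      then have "\<gamma> \<in> C \<beta>0 \<inter> under s \<delta>" using gC unfolding under_def by simp
      also have "C \<beta>0 \<inter> under s \<delta> = C (\<alpha> \<delta>) \<inter> under s \<delta>" using \<alpha>prop[OF d] by simp
      finally show ?thesis by simp
    qed
    then show "\<gamma> \<in> A (\<alpha> \<delta>)" using CA[OF \<alpha>L[OF d]] by blast
  qed
  have DI: "D \<subseteq> \<Inter>(A ` ?I)" using DA by blast
  have IF: "\<Inter>(A ` ?I) \<subseteq> Field s"
  proof -
    obtain x0 where x0: "x0 \<in> Field s" using sinf by (metis finite.emptyI ex_in_conv)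
    have "\<Inter>(A ` ?I) \<subseteq> A (\<alpha> x0)" using x0 by blast
    then show ?thesis using AF[OF \<alpha>L[OF x0]] by blast
  qed
  have closedD: "closed s D"
    unfolding closed_def
  proof (intro allI impI)
    fix B d assume H: "B \<subseteq> D \<and> B \<noteq> {} \<and> is_lub s B d"
    then have BD: "B \<subseteq> D" and Bne: "B \<noteq> {}" and lub: "is_lub s B d" by auto
    have dF: "d \<in> Field s" and ub: "\<forall>b\<in>B. (b,d) \<in> s"
      and least: "\<forall>d'\<in>Field s. (\<forall>b\<in>B. (b,d') \<in> s) \<longrightarrow> (d,d') \<in> s"
      using lub unfolding is_lub_def by blast+
    have BC0: "B \<subseteq> C \<beta>0" using BD unfolding D_def by blast
    have d0: "d \<in> C \<beta>0" using clC[OF b0L] BC0 Bne lub unfolding club_def closed_def by blast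
    have "d \<in> C (\<alpha> \<delta>)" if dl: "\<delta> \<in> underS s d" for \<delta>
    proof -
      have dd: "(\<delta>,d) \<in> s" "\<delta> \<noteq> d" using dl unfolding underS_def by auto
      have \<delta>F: "\<delta> \<in> Field s" using co_field[OF dd(1)] by blast
      let ?B' = "{b\<in>B. \<delta> \<in> underS s b}"
      have below: "(b,\<delta>) \<in> s" if b: "b \<in> B" "b \<notin> ?B'" for b
      proof (cases "b = \<delta>")
        case True then show ?thesis using co_refl[OF s \<delta>F] by simp
      next
        case False
        have bF: "b \<in> Field s" using b BD DF by blast
        have "(b,\<delta>) \<in> s \<or> (\<delta>,b) \<in> s" using co_total[OF s bF \<delta>F] .
        then show ?thesis using b False unfolding underS_def by auto
      qed
      have ne: "?B' \<noteq> {}"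
      proof
        assume e: "?B' = {}"
        then have "\<forall>b\<in>B. (b,\<delta>) \<in> s" using below by blast
        then have "(d,\<delta>) \<in> s" using least \<delta>F by blast
        then show False using co_antisym[OF s dd(1)] dd(2) by simp
      qed
      have lub': "is_lub s ?B' d"
        unfolding is_lub_def
      proof (intro conjI ballI impI)
        show "d \<in> Field s" by (rule dF)
      next
        fix b assume "b \<in> ?B'" then show "(b,d) \<in> s" using ub by blast
      next
        fix d' assume d': "d' \<in> Field s" and ub': "\<forall>b\<in>?B'. (b,d') \<in> s"
        obtain b' where b': "b' \<in> ?B'" using ne by blast
        have "(b,d') \<in> s" if b: "b \<in> B" for b
        proof (cases "b \<in> ?B'")
          case True then show ?thesis using ub' by blast
        next
          case False
          have 1: "(b,\<delta>) \<in> s" using below[OF b False] .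
          have 2: "(\<delta>,b') \<in> s" using b' unfolding underS_def by blast
          have 3: "(b',d') \<in> s" using ub' b' by blast
          show ?thesis using co_trans[OF s co_trans[OF s 1 2] 3] .
        qed
        then show "(d,d') \<in> s" using least d' by blast
      qed
      have sub: "?B' \<subseteq> C (\<alpha> \<delta>)" using BD unfolding D_def by blast
      show ?thesis using clC[OF \<alpha>L[OF \<delta>F]] sub ne lub' unfolding club_def closed_def by blast
    qed
    then show "d \<in> D" unfolding D_def using d0 by blast
  qed
  have unbD: "unbounded s D"
  proof -
    define nxt where "nxt X x = (SOME y. y \<in> X \<and> (x,y) \<in> s \<and> x \<noteq> y)" for X x
    have nxt: "nxt (C i) x \<in> C i \<and> (x, nxt (C i) x) \<in> s \<and> x \<noteq> nxt (C i) x"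
      if "i \<in> ?L" "x \<in> Field s" for i x
    proof -
      have "\<exists>y. y \<in> C i \<and> (x,y) \<in> s \<and> x \<noteq> y"
        using clC[OF that(1)] that(2) unfolding club_def unbounded_def by blast
      then show ?thesis unfolding nxt_def by (rule someI_ex)
    qed
    define K where "K x = insert x (insert (nxt (C \<beta>0) x) ((\<lambda>\<delta>. nxt (C (\<alpha> \<delta>)) x) ` under s x))" for x
    have KF: "K x \<subseteq> Field s" if x: "x \<in> Field s" for x
    proof -
      have 1: "nxt (C \<beta>0) x \<in> Field s" using nxt[OF b0L x] CF[OF b0L] by blast
      have 2: "nxt (C (\<alpha> \<delta>)) x \<in> Field s" if "\<delta> \<in> under s x" for \<delta>
      proof -
        have "(\<delta>, x) \<in> s" using that unfolding under_def by simp
        then have dF: "\<delta> \<in> Field s" by (rule FieldI1)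
        show ?thesis using nxt[OF \<alpha>L[OF dF] x] CF[OF \<alpha>L[OF dF]] by blast
      qed
      have 3: "(\<lambda>\<delta>. nxt (C (\<alpha> \<delta>)) x) ` under s x \<subseteq> Field s" using 2 by (rule image_subsetI)
      show ?thesis unfolding K_def using x 1 3 by (simp only: insert_subset)
    qed
    have Ks: "|K x| <o s" if x: "x \<in> Field s" for x
    proof -
      have "|(\<lambda>\<delta>. nxt (C (\<alpha> \<delta>)) x) ` under s x| <o s"
        by (rule ordLeq_ordLess_trans[OF card_of_image under_small[OF s sinf x]])
      then show ?thesis unfolding K_def by (rule ins_small[OF s sinf ins_small[OF s sinf]])
    qed
    define stp where "stp x = (SOME g. g \<in> Field s \<and> (\<forall>b\<in>K x. (b,g) \<in> s \<and> b \<noteq> g))" for x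
    have stp: "stp x \<in> Field s \<and> (\<forall>b\<in>K x. (b, stp x) \<in> s \<and> b \<noteq> stp x)" if "x \<in> Field s" for x
    proof -
      have "\<exists>g. g \<in> Field s \<and> (\<forall>b\<in>K x. (b,g) \<in> s \<and> b \<noteq> g)"
        using BND[OF s reg sinf KF[OF that] Ks[OF that]] by blast
      then show ?thesis unfolding stp_def by (rule someI_ex)
    qed
    show ?thesis unfolding unbounded_def
    proof
      fix a assume a: "a \<in> Field s"
      define xs where "xs n = (stp ^^ n) a" for n
      have xsS: "xs (Suc n) = stp (xs n)" for n by (simp add: xs_def)
      have xs0: "xs 0 = a" by (simp add: xs_def)
      have xsF: "xs n \<in> Field s" for n
      proof (induction n)
        case 0 then show ?case using a xs0 by simp
      next
        case (Suc n) show ?case unfolding xsS using conjunct1[OF stp[OF Suc]] .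
      qed
      have KS: "\<forall>b\<in>K (xs n). (b, xs (Suc n)) \<in> s \<and> b \<noteq> xs (Suc n)" for n
        unfolding xsS using conjunct2[OF stp[OF xsF[of n]]] .
      have stepS: "(xs n, xs (Suc n)) \<in> s" and stepN: "xs n \<noteq> xs (Suc n)" for n
        using KS[of n] unfolding K_def by auto
      have mono: "(xs i, xs j) \<in> s" if "i \<le> j" for i j
        using that
      proof (induction j)
        case 0 then show ?case using co_refl[OF s xsF[of 0]] by simp
      next
        case (Suc j)
        show ?case
        proof (cases "i \<le> j")
          case True then show ?thesis using co_trans[OF s Suc.IH[OF True] stepS[of j]] by simp
        next
          case False then have "i = Suc j" using Suc.prems by simp
          then show ?thesis using co_refl[OF s xsF[of "Suc j"]] by simp
        qed
      qed
      have rF: "range xs \<subseteq> Field s" using xsF by blast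
      have "|range xs| <o s" by (rule ordLeq_ordLess_trans[OF card_of_image natS])
      then obtain g where g: "g \<in> Field s" "\<forall>b\<in>range xs. (b,g) \<in> s \<and> b \<noteq> g"
        using BND[OF s reg sinf rF] by blast
      have "\<forall>b\<in>range xs. (b,g) \<in> s" using g(2) by blast
      then obtain d where lub: "is_lub s (range xs) d" using LUB[OF s rF g(1)] by blast
      have dF: "d \<in> Field s" and xsd: "\<And>n. (xs n, d) \<in> s"
        and least: "\<forall>d'\<in>Field s. (\<forall>b\<in>range xs. (b,d') \<in> s) \<longrightarrow> (d,d') \<in> s"
        using lub unfolding is_lub_def by blast+
      have d0: "d \<in> C \<beta>0"
      proof -
        let ?y = "\<lambda>n. nxt (C \<beta>0) (xs n)"
        have y1: "(xs n, ?y n) \<in> s" if "0 \<le> n" for n using nxt[OF b0L xsF[of n]] by blast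
        have y2: "(?y n, xs (Suc n)) \<in> s" if "0 \<le> n" for n using KS[of n] unfolding K_def by blast
        have tl: "is_lub s (?y ` {0..}) d" by (rule tail_lub[OF s lub mono y1 y2])
        have sub: "?y ` {0..} \<subseteq> C \<beta>0" using nxt[OF b0L xsF] by blast
        have ne: "?y ` {0..} \<noteq> {}" by blast
        show ?thesis using clC[OF b0L] sub ne tl unfolding club_def closed_def by blast
      qed
      have d\<alpha>: "d \<in> C (\<alpha> \<delta>)" if dl: "\<delta> \<in> underS s d" for \<delta>
      proof -
        have dd: "(\<delta>,d) \<in> s" "\<delta> \<noteq> d" using dl unfolding underS_def by auto
        have \<delta>F: "\<delta> \<in> Field s" using co_field[OF dd(1)] by blast
        obtain k where k: "(\<delta>, xs k) \<in> s"
        proof (rule ccontr)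
          assume "\<not> thesis"
          then have nk: "\<forall>k. (\<delta>, xs k) \<notin> s" using that by blast
          have "\<forall>b\<in>range xs. (b,\<delta>) \<in> s"
          proof
            fix b assume "b \<in> range xs"
            then obtain k where "b = xs k" by blast
            then show "(b,\<delta>) \<in> s" using co_total[OF s xsF[of k] \<delta>F] nk by blast
          qed
          then have "(d,\<delta>) \<in> s" using least \<delta>F by blast
          then show False using co_antisym[OF s dd(1)] dd(2) by simp
        qed
        let ?y = "\<lambda>n. nxt (C (\<alpha> \<delta>)) (xs n)"
        have y1: "(xs n, ?y n) \<in> s" if "k \<le> n" for n using nxt[OF \<alpha>L[OF \<delta>F] xsF[of n]] by blast
        have y2: "(?y n, xs (Suc n)) \<in> s" if kn: "k \<le> n" for n
        proof -
          have "(\<delta>, xs n) \<in> s" using co_trans[OF s k mono[OF kn]] .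
          then have "\<delta> \<in> under s (xs n)" unfolding under_def by simp
          then have "?y n \<in> K (xs n)" unfolding K_def by blast
          then show ?thesis using KS[of n] by blast
        qed
        have tl: "is_lub s (?y ` {k..}) d" by (rule tail_lub[OF s lub mono y1 y2])
        have sub: "?y ` {k..} \<subseteq> C (\<alpha> \<delta>)" using nxt[OF \<alpha>L[OF \<delta>F] xsF] by blast
        have ne: "?y ` {k..} \<noteq> {}" by blast
        show ?thesis using clC[OF \<alpha>L[OF \<delta>F]] sub ne tl unfolding club_def closed_def by blast
      qed
      have dD: "d \<in> D" unfolding D_def using d0 d\<alpha> by blast
      have ad: "(a,d) \<in> s" using co_trans[OF s stepS[of 0] xsd[of "Suc 0"]] xs0 by simp
      have "a \<noteq> d"
      proof
        assume "a = d"
        then have "(xs (Suc 0), xs 0) \<in> s" using xsd[of "Suc 0"] xs0 by simp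
        then have "xs 0 = xs (Suc 0)" using co_antisym[OF s stepS[of 0]] by simp
        then show False using stepN[of 0] by simp
      qed
      then show "\<exists>b\<in>D. (a, b) \<in> s \<and> a \<noteq> b" using dD ad by blast
    qed
  qed
  have "club s D" unfolding club_def using DF closedD unbD by blast
  then have "\<Inter>(A ` ?I) \<in> Cub s" unfolding Cub_def using DI IF by blast
  then show "\<exists>I\<subseteq>?L. |I| =o s \<and> \<Inter>(A ` I) \<in> Cub s" using IL Icard by blast
qed

lemma aleph_basic: "is_aleph m s \<Longrightarrow> Card_order s \<and> natLeq \<le>o s"
proof (induction m arbitrary: s)
  case 0
  then show ?case by (simp add: ordIso_imp_ordLeq ordIso_symmetric)
next
  case (Suc m)
  then obtain t :: "'a rel" where t: "is_aleph m t" "s =o cardSuc t" and cs: "Card_order s"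
    unfolding is_aleph.simps by blast
  have "natLeq \<le>o t" "Card_order t" using Suc.IH[OF t(1)] by auto
  then have "natLeq \<le>o cardSuc t" using ordLeq_transitive[OF _ cardSuc_ordLeq] by blast
  then have "natLeq \<le>o s" by (rule ordLeq_ordIso_trans[OF _ ordIso_symmetric[OF t(2)]])
  then show ?case using cs by simp
qed

lemma aleph_inf: "is_aleph m s \<Longrightarrow> \<not> finite (Field s)"
  using aleph_basic[of m s] cinfinite_mono[OF _ natLeq_cinfinite] unfolding cinfinite_def by blast

lemma aleph_unique: "is_aleph m (s::'a rel) \<Longrightarrow> is_aleph m (s'::'a rel) \<Longrightarrow> s =o s'"
proof (induction m arbitrary: s s')
  case 0
  then have "s =o natLeq" "s' =o natLeq" by simp_all
  then show ?case using ordIso_transitive[OF _ ordIso_symmetric] by blast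
next
  case (Suc m)
  obtain t :: "'a rel" where t: "is_aleph m t" "s =o cardSuc t" using Suc.prems(1) unfolding is_aleph.simps by blast
  obtain t' :: "'a rel" where t': "is_aleph m t'" "s' =o cardSuc t'" using Suc.prems(2) unfolding is_aleph.simps by blast
  have "t =o t'" using Suc.IH[OF t(1) t'(1)] .
  then have c: "cardSuc t =o cardSuc t'"
    using cardSuc_invar_ordIso[of t t'] aleph_basic[OF t(1)] aleph_basic[OF t'(1)] by simp
  show ?case by (rule ordIso_transitive[OF ordIso_transitive[OF t(2) c] ordIso_symmetric[OF t'(2)]])
qed

lemma aleph_succ_less: "is_aleph m (s::'a rel) \<Longrightarrow> is_aleph (Suc m) (s'::'a rel) \<Longrightarrow> s <o s'"
proof -
  assume a: "is_aleph m s" and b: "is_aleph (Suc m) s'"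
  obtain t :: "'a rel" where t: "is_aleph m t" "s' =o cardSuc t" using b unfolding is_aleph.simps by blast
  have "s =o t" using aleph_unique[OF a t(1)] .
  moreover have "t <o cardSuc t" by (rule cardSuc_greater[OF conjunct1[OF aleph_basic[OF t(1)]]])
  ultimately have "s <o cardSuc t" by (rule ordIso_ordLess_trans)
  then show "s <o s'" by (rule ordLess_ordIso_trans[OF _ ordIso_symmetric[OF t(2)]])
qed

lemma aleph_mono: "m \<le> k \<Longrightarrow> is_aleph m (s::'a rel) \<Longrightarrow> is_aleph k (s'::'a rel) \<Longrightarrow> s \<le>o s'"
proof (induction k arbitrary: s')
  case 0
  then have "m = 0" by simp
  then show ?case using 0 aleph_unique[of 0 s s'] ordIso_imp_ordLeq by simp
next
  case (Suc k)
  show ?case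
  proof (cases "m = Suc k")
    case True then show ?thesis using Suc.prems aleph_unique[of "Suc k" s s'] ordIso_imp_ordLeq by simp
  next
    case False
    then have mk: "m \<le> k" using Suc.prems(1) by simp
    obtain t :: "'a rel" where t: "is_aleph k t" "s' =o cardSuc t" using Suc.prems(3) unfolding is_aleph.simps by blast
    have "s \<le>o t" using Suc.IH[OF mk Suc.prems(2) t(1)] .
    moreover have "t <o s'" using aleph_succ_less[OF t(1) Suc.prems(3)] .
    ultimately show ?thesis by (rule ordLess_imp_ordLeq[OF ordLeq_ordLess_trans])
  qed
qed

lemma realize:
  fixes q :: "'b rel" and w :: "'a rel"
  assumes q: "Card_order q" and qw: "q \<le>o w"
  shows "\<exists>p::'a rel. Card_order p \<and> p =o q"
proof -
  have "|Field q| \<le>o |Field w|" using card_of_mono2[OF qw] .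
  also have "|Field w| \<le>o |UNIV :: 'a set|" by (rule card_of_mono1) simp
  finally have "|Field q| \<le>o |UNIV :: 'a set|" .
  then obtain f :: "'b \<Rightarrow> 'a" where f: "inj_on f (Field q)" using card_of_ordLeq[of "Field q" "UNIV :: 'a set"] by auto
  have "bij_betw f (Field q) (f ` Field q)" using f by (rule bij_betw_imageI) simp
  then have "|Field q| =o |f ` Field q|" using card_of_ordIso by blast
  then have "|f ` Field q| =o |Field q|" by (rule ordIso_symmetric)
  then have "|f ` Field q| =o q" using card_of_Field_ordIso[OF q] by (rule ordIso_transitive)
  then show ?thesis using card_of_Card_order by blast
qed

lemma Func_Pow_le:
  assumes inf: "\<not> finite A"
  shows "|Func (UNIV :: nat set) (Pow A)| \<le>o |Pow A|"
proof -
  have "inj_on (\<lambda>f. Sigma UNIV f) (Func (UNIV :: nat set) (Pow A))"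
  proof (rule inj_onI)
    fix f g :: "nat \<Rightarrow> 'a set" assume "Sigma UNIV f = Sigma UNIV g"
    then have "\<forall>n a. a \<in> f n \<longleftrightarrow> a \<in> g n" by (metis SigmaD2 SigmaI UNIV_I)
    then show "f = g" by (intro ext set_eqI) blast
  qed
  moreover have "(\<lambda>f. Sigma UNIV f) ` Func (UNIV :: nat set) (Pow A) \<subseteq> Pow (UNIV \<times> A)"
    unfolding Func_def by blast
  ultimately have 1: "|Func (UNIV :: nat set) (Pow A)| \<le>o |Pow ((UNIV :: nat set) \<times> A)|"
    using card_of_ordLeq by blast
  have "|(UNIV :: nat set)| \<le>o |A|" using inf infinite_iff_card_of_nat by blast
  then have "|(UNIV :: nat set) \<times> A| \<le>o |A \<times> A|" by (rule card_of_Times_mono1)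
  then have "|(UNIV :: nat set) \<times> A| \<le>o |A|"
    using card_of_Times_same_infinite[OF inf] by (rule ordLeq_ordIso_trans)
  then have "|Pow ((UNIV :: nat set) \<times> A)| \<le>o |Pow A|" by (rule Pow_mono_card)
  then show ?thesis using 1 by (rule ordLeq_transitive[rotated])
qed

lemma koenig:
  fixes P :: "'b set" and Y :: "nat \<Rightarrow> 'b set" and e :: "(nat \<Rightarrow> 'b) \<Rightarrow> 'b"
  assumes cover: "P \<subseteq> (\<Union>k. Y k)" and small: "\<And>k. |Y k| <o |P|"
    and e: "inj_on e (Func UNIV P)" "e ` Func UNIV P \<subseteq> P"
  shows False
proof -
  define V where "V k = (\<lambda>f. f k) ` {f \<in> Func UNIV P. e f \<in> Y k}" for k
  have Vs: "|V k| <o |P|" for k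
  proof -
    have 1: "|V k| \<le>o |{f \<in> Func UNIV P. e f \<in> Y k}|" unfolding V_def by (rule card_of_image)
    have "inj_on e {f \<in> Func UNIV P. e f \<in> Y k}" by (rule inj_on_subset[OF e(1)]) blast
    moreover have "e ` {f \<in> Func UNIV P. e f \<in> Y k} \<subseteq> Y k" by blast
    ultimately have 2: "|{f \<in> Func UNIV P. e f \<in> Y k}| \<le>o |Y k|"
      using card_of_ordLeq[of "{f \<in> Func UNIV P. e f \<in> Y k}" "Y k"] by blast
    show ?thesis using ordLeq_ordLess_trans[OF ordLeq_transitive[OF 1 2] small] .
  qed
  have ex: "\<exists>y. y \<in> P \<and> y \<notin> V k" for k
  proof (rule ccontr)
    assume "\<not> ?thesis"
    then have "P \<subseteq> V k" by blast
    then have "|P| \<le>o |V k|" by (rule card_of_mono1)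
    then show False using not_ordLess_ordLeq[OF Vs[of k]] by simp
  qed
  define z where "z k = (SOME y. y \<in> P \<and> y \<notin> V k)" for k
  have z: "z k \<in> P \<and> z k \<notin> V k" for k unfolding z_def by (rule someI_ex[OF ex])
  have zF: "z \<in> Func UNIV P" unfolding Func_def using z by simp
  then have "e z \<in> P" using e(2) by (rule rev_subsetD[OF imageI])
  then have "e z \<in> (\<Union>k. Y k)" using cover by (rule subsetD[rotated])
  then obtain k where k: "e z \<in> Y k" by (rule UN_E) simp
  have "z \<in> {f \<in> Func UNIV P. e f \<in> Y k}" using zF k by simp
  then have "z k \<in> V k" unfolding V_def by (rule imageI)
  then show False using z[of k] by simp
qed

lemma powcong: "|A| =o |B| \<Longrightarrow> |Pow A| =o |Pow B|"
proof -
  assume "|A| =o |B|"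
  then have "|A| \<le>o |B|" "|B| \<le>o |A|" using ordIso_iff_ordLeq by blast+
  then have "|Pow A| \<le>o |Pow B|" "|Pow B| \<le>o |Pow A|" using Pow_mono_card by blast+
  then show ?thesis using ordIso_iff_ordLeq by blast
qed

theorem proposition4p14:
  fixes n :: nat and r w :: "'a rel"
  assumes "1 \<le> n"
    and "is_aleph n r"
    and "is_aleph_omega w"
    and "\<forall>m\<ge>n. \<forall>s::'a rel. is_aleph m s \<longrightarrow> \<not> Gal (Cub s) s (Pow (Field s))"
  shows "ordLess2 w (card_of (Pow (Field r))) \<and> \<not> strong_limit w"
proof -
  note ar = assms(2)
  note H = assms(4)
  have wC: "Card_order w" using assms(3) unfolding is_aleph_omega_def by blast
  have wgt: "s <o w" if "is_aleph m s" for m and s :: "'a rel"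
    using assms(3) that unfolding is_aleph_omega_def by blast
  have wleast: "w \<le>o t" if "Card_order t" "\<forall>m (s::'a rel). is_aleph m s \<longrightarrow> s <o t" for t :: "'a rel"
    using assms(3) that unfolding is_aleph_omega_def by blast
  have rC: "Card_order r" using aleph_basic[OF ar] by blast
  have rinf: "\<not> finite (Field r)" by (rule aleph_inf[OF ar])
  have ex: "\<exists>s::'a rel. is_aleph m s" for m
  proof (induction m)
    case 0
    have "natLeq \<le>o r" using aleph_basic[OF ar] by blast
    then have "natLeq \<le>o w" using ordLess_imp_ordLeq[OF wgt[OF ar]] by (rule ordLeq_transitive)
    then obtain p :: "'a rel" where "Card_order p" "p =o natLeq"
      using realize[OF natLeq_Card_order] by blast
    then have "is_aleph 0 p" by simp
    then show ?case by blast
  next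
    case (Suc m)
    then obtain s :: "'a rel" where s: "is_aleph m s" by blast
    have sC: "Card_order s" using aleph_basic[OF s] by blast
    have "cardSuc s \<le>o w" by (rule cardSuc_least[OF sC wC wgt[OF s]])
    then obtain p :: "'a rel" where "Card_order p" "p =o cardSuc s"
      using realize[OF cardSuc_Card_order[OF sC]] by blast
    then have "is_aleph (Suc m) p" using s by auto
    then show ?case by blast
  qed
  define S where "S m = (SOME s::'a rel. is_aleph m s)" for m
  have S: "is_aleph m (S m)" for m unfolding S_def by (rule someI_ex[OF ex])
  have SC: "Card_order (S m)" for m using aleph_basic[OF S] by blast
  have main: "w <o |Pow (Field r)|"
  proof (rule ccontr)
    assume nl: "\<not> w <o |Pow (Field r)|"
    have Pw: "|Pow (Field r)| \<le>o w"
      using ordLess_or_ordLeq[OF co_wo[OF wC] card_of_Well_order] nl by blast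
    have nostep: "|Pow (Field (S (Suc k)))| \<le>o |Pow (Field (S k))|" if kn: "n \<le> k" for k
    proof (rule ccontr)
      assume "\<not> ?thesis"
      then have lt: "|Pow (Field (S k))| <o |Pow (Field (S (Suc k)))|"
        by (simp add: not_ordLeq_iff_ordLess[OF card_of_Well_order card_of_Well_order])
      obtain t :: "'a rel" where t: "is_aleph k t" "S (Suc k) =o cardSuc t"
        using S[of "Suc k"] unfolding is_aleph.simps by blast
      have "t =o S k" by (rule aleph_unique[OF t(1) S])
      then have "|Field t| =o |Field (S k)|" by (rule card_of_cong)
      then have "|Pow (Field t)| =o |Pow (Field (S k))|" by (rule powcong)
      then have pw: "|Pow (Field t)| <o |Pow (Field (S (Suc k)))|" using lt by (rule ordIso_ordLess_trans)
      have tC: "Card_order t" using aleph_basic[OF t(1)] by blast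
      have "Gal (Cub (S (Suc k))) (S (Suc k)) (Pow (Field (S (Suc k))))"
        by (rule galvin[OF SC tC aleph_inf[OF t(1)] t(2) pw])
      moreover have "Suc k \<ge> n" using kn by simp
      ultimately show False using H S[of "Suc k"] by blast
    qed
    have bnd: "|Pow (Field (S k))| \<le>o |Pow (Field r)|" if kn: "n \<le> k" for k
      using kn
    proof (induction k rule: dec_induct)
      case base
      have "S n =o r" by (rule aleph_unique[OF S ar])
      then have "|Pow (Field (S n))| =o |Pow (Field r)|" by (rule powcong[OF card_of_cong])
      then show ?case by (rule ordIso_imp_ordLeq)
    next
      case (step k)
      show ?case using ordLeq_transitive[OF nostep[OF step(1)] step(3)] .
    qed
    have allless: "s <o |Pow (Field r)|" if sa: "is_aleph m s" for m and s :: "'a rel"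
    proof -
      have 1: "s \<le>o S (m + n)" by (rule aleph_mono[OF _ sa S]) simp
      have 2: "S (m + n) =o |Field (S (m + n))|" by (rule ordIso_symmetric[OF card_of_Field_ordIso[OF SC]])
      have 3: "|Field (S (m + n))| <o |Pow (Field (S (m + n)))|" by (rule card_of_Pow)
      have 4: "|Pow (Field (S (m + n)))| \<le>o |Pow (Field r)|" by (rule bnd) simp
      show ?thesis
        using ordLeq_ordLess_trans[OF 1 ordIso_ordLess_trans[OF 2 ordLess_ordLeq_trans[OF 3 4]]] .
    qed
    obtain p :: "'a rel" where pC: "Card_order p" and pP: "p =o |Pow (Field r)|"
      using realize[OF card_of_Card_order Pw] by blast
    have "w \<le>o p"
    proof (rule wleast[OF pC], intro allI impI)
      fix m and s :: "'a rel" assume "is_aleph m s"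
      then show "s <o p" using ordLess_ordIso_trans[OF allless ordIso_symmetric[OF pP]] by blast
    qed
    then have wP: "w \<le>o |Pow (Field r)|" using pP by (rule ordLeq_ordIso_trans)
    have exa: "\<exists>a. a \<in> Field w \<and> S k \<le>o |underS w a|" for k
    proof -
      have "S k <o w" by (rule wgt[OF S])
      then obtain a where a: "a \<in> Field w" and iso: "S k =o Restr w (underS w a)"
        using ordLess_iff_ordIso_Restr[OF co_wo[OF wC] co_wo[OF SC]] by blast
      have 1: "S k =o |Field (S k)|" by (rule ordIso_symmetric[OF card_of_Field_ordIso[OF SC]])
      have 2: "|Field (S k)| =o |Field (Restr w (underS w a))|" by (rule card_of_cong[OF iso])
      have 3: "|Field (Restr w (underS w a))| \<le>o |underS w a|" by (rule card_of_mono1[OF Field_Restr_subset])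
      have "S k \<le>o |underS w a|" using ordIso_ordLeq_trans[OF ordIso_transitive[OF 1 2] 3] .
      then show ?thesis using a by blast
    qed
    have exa': "\<forall>k. \<exists>a. a \<in> Field w \<and> S k \<le>o |underS w a|" using exa by blast
    from choice[OF exa'] obtain a where a: "\<And>k. a k \<in> Field w \<and> S k \<le>o |underS w (a k)|"
      by (elim exE) blast
    have cover: "Field w \<subseteq> (\<Union>k. underS w (a k))"
    proof
      fix x assume x: "x \<in> Field w"
      have ux: "|underS w x| <o w" by (rule card_of_underS[OF wC x])
      have "\<exists>k. |underS w x| \<le>o S k"
      proof (rule ccontr)
        assume "\<not> ?thesis"
        then have lt: "S k <o |underS w x|" for k
          using not_ordLeq_iff_ordLess[OF co_wo[OF SC] card_of_Well_order] by blast
        have "w \<le>o |underS w x|"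
        proof (rule wleast[OF card_of_Card_order], intro allI impI)
          fix m and s :: "'a rel" assume sa: "is_aleph m s"
          show "s <o |underS w x|" by (rule ordIso_ordLess_trans[OF aleph_unique[OF sa S] lt])
        qed
        then show False using not_ordLess_ordLeq[OF ux] by simp
      qed
      then obtain k where k: "|underS w x| \<le>o S k" by blast
      have "x \<in> underS w (a (Suc k))"
      proof (rule ccontr)
        assume nx: "x \<notin> underS w (a (Suc k))"
        have aF: "a (Suc k) \<in> Field w" using a by blast
        have ax: "(a (Suc k), x) \<in> w"
        proof (cases "x = a (Suc k)")
          case True then show ?thesis using co_refl[OF wC x] by simp
        next
          case False
          then show ?thesis using nx co_total[OF wC x aF] unfolding underS_def by blast
        qed
        have "underS w (a (Suc k)) \<subseteq> underS w x"
        proof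
          fix y assume "y \<in> underS w (a (Suc k))"
          then have y: "(y, a (Suc k)) \<in> w" "y \<noteq> a (Suc k)" unfolding underS_def by auto
          have "(y, x) \<in> w" by (rule co_trans[OF wC y(1) ax])
          moreover have "y \<noteq> x"
          proof
            assume "y = x"
            then have "x = a (Suc k)" using co_antisym[OF wC ax] y(1) by simp
            then show False using y(2) \<open>y = x\<close> by simp
          qed
          ultimately show "y \<in> underS w x" unfolding underS_def by simp
        qed
        then have "|underS w (a (Suc k))| \<le>o |underS w x|" by (rule card_of_mono1)
        then have "S (Suc k) \<le>o |underS w x|"
          by (rule ordLeq_transitive[OF conjunct2[OF a[of "Suc k"]]])
        then have "S (Suc k) \<le>o S k" using k by (rule ordLeq_transitive)
        moreover have "S k <o S (Suc k)" by (rule aleph_succ_less[OF S S])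
        ultimately show False using not_ordLess_ordLeq by metis
      qed
      then show "x \<in> (\<Union>k. underS w (a k))" by blast
    qed
    let ?P = "Pow (Field r)"
    have "|?P| \<le>o |Field w|" using Pw ordIso_symmetric[OF card_of_Field_ordIso[OF wC]] by (rule ordLeq_ordIso_trans)
    then obtain h where h: "h ` Field w = ?P" using card_of_ordLeq2[of ?P "Field w"] by blast
    define Y where "Y k = h ` underS w (a k)" for k
    have Ycov: "?P \<subseteq> (\<Union>k. Y k)"
    proof
      fix X assume "X \<in> ?P"
      then obtain x where x: "x \<in> Field w" "X = h x" using h by (metis imageE)
      then obtain k where "x \<in> underS w (a k)" using cover by blast
      then have "X \<in> Y k" unfolding Y_def using x(2) by (rule rev_image_eqI)
      then show "X \<in> (\<Union>k. Y k)" by blast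
    qed
    have Ysmall: "|Y k| <o |?P|" for k
    proof -
      have 1: "|Y k| \<le>o |underS w (a k)|" unfolding Y_def by (rule card_of_image)
      have 2: "|underS w (a k)| <o w" by (rule card_of_underS[OF wC conjunct1[OF a]])
      show ?thesis using ordLess_ordLeq_trans[OF ordLeq_ordLess_trans[OF 1 2] wP] .
    qed
    have "|Func (UNIV :: nat set) ?P| \<le>o |?P|" by (rule Func_Pow_le[OF rinf])
    then obtain e :: "(nat \<Rightarrow> 'a set) \<Rightarrow> 'a set" where e: "inj_on e (Func UNIV ?P)" "e ` Func UNIV ?P \<subseteq> ?P"
      using card_of_ordLeq[of "Func (UNIV :: nat set) ?P" ?P] by blast
    show False by (rule koenig[OF Ycov Ysmall e])
  qed
  have "\<not> strong_limit w"
  proof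
    assume "strong_limit w"
    then have "|Pow (Field r)| <o w" using rC wgt[OF ar] unfolding strong_limit_def by blast
    then show False using not_ordLess_ordLeq[OF main] ordLess_imp_ordLeq by metis
  qed
  then show ?thesis using main by blast
qed

end
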